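(* Let $G'=(V',E')$ be a subgraph of a graph $G=(V,E)$, let $\alpha$ and $\beta$ be two $k$-colorings of $G$, and let $\alpha'=\alpha|_{V'}$ and $\beta'=\beta|_{V'}$. Let $T'\subseteq V'$ and $T\subseteq V$. If the $\alpha'$-node and the $\beta'$-node of $\mathcal{C}^c_k(G',T')$ lie in different components, then the $\alpha$-node and the $\beta$-node of $\mathcal{C}^c_k(G,T)$ lie in different components.
   Context: A $k$-coloring of $G$ is a map $\alpha:V(G)\to\{1,\dots,k\}$ with $\alpha(u)\ne\alpha(v)$ for every edge $uv$. $\mathcal{C}_k(G)$ has the $k$-colorings as nodes, adjacent iff they differ on exactly one vertex. For $T\subseteq V(G)$, label each coloring $\gamma$ by $\gamma|_T$. A label component is a maximal set of colorings with the same label inducing a connected subgraph of $\mathcal{C}_k(G)$. The contracted solution graph $\mathcal{C}^c_k(G,T)=(H,\ell)$ has one node $x$ per label component $S_x$, distinct $x,y$ adjacent iff some $\gamma\in S_x,\gamma'\in S_y$ are adjacent in $\mathcal{C}_k(G)$, and $\ell(x)$ the common label on $S_x$. A certificate is an assignment of nonempty sets $S_x$ of $k$-colorings of $G$ to the nodes $x$ of $H$ such that: the $S_x$ partition the $k$-colorings; $\gamma|_T=\ell(x)$ for $\gamma\in S_x$; adjacent nodes have distinct labels; each $S_x$ induces a connected subgraph of $\mathcal{C}_k(G)$; distinct $x,y$ are adjacent iff some $\gamma\in S_x$ and $\gamma'\in S_y$ are adjacent in $\mathcal{C}_k(G)$. For a fixed certificate, the $\gamma$-node is the node $x$ with $\gamma\in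 S_x$; when several $\gamma$-nodes in one graph are considered they are taken with respect to the same certificate. *)

theory Defs
  imports "HOL-Library.FuncSet"
begin

definition graph :: "'v set \<Rightarrow> 'v set set \<Rightarrow> bool" where
  "graph V E \<longleftrightarrow> finite V \<and> (\<forall>e\<in>E. e \<subseteq> V \<and> card e = 2)"

definition subgraph :: "'v set \<Rightarrow> 'v set set \<Rightarrow> 'v set \<Rightarrow> 'v set set \<Rightarrow> bool" where
  "subgraph V' E' V E \<longleftrightarrow> graph V' E' \<and> graph V E \<and> V' \<subseteq> V \<and> E' \<subseteq> E"

definition colorings :: "'v set \<Rightarrow> 'v set set \<Rightarrow> nat \<Rightarrow> ('v \<Rightarrow> nat) set" where
  "colorings V E k = {\<alpha> \<in> V \<rightarrow>\<^sub>E {1..k}. \<forall>e\<in>E. \<forall>u\<in>e. \<forall>v\<in>e. u \<noteq> v \<longrightarrow> \<alpha> u \<noteq> \<alpha> v}"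

text \<open>Adjacency in the reconfiguration graph C_k(G): differ on exactly one vertex.\<close>
definition recol_adj :: "'v set \<Rightarrow> ('v \<Rightarrow> nat) \<Rightarrow> ('v \<Rightarrow> nat) \<Rightarrow> bool" where
  "recol_adj V \<alpha> \<beta> \<longleftrightarrow> card {v \<in> V. \<alpha> v \<noteq> \<beta> v} = 1"

definition induces_connected :: "('a \<Rightarrow> 'a \<Rightarrow> bool) \<Rightarrow> 'a set \<Rightarrow> bool" where
  "induces_connected R S \<longleftrightarrow>
     (\<forall>x\<in>S. \<forall>y\<in>S. (x, y) \<in> {(a, b). a \<in> S \<and> b \<in> S \<and> R a b}\<^sup>*)"

definition label_connected_set ::
    "'v set \<Rightarrow> 'v set set \<Rightarrow> nat \<Rightarrow> 'v set \<Rightarrow> ('v \<Rightarrow> nat) set \<Rightarrow> bool" where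
  "label_connected_set V E k T S \<longleftrightarrow>
     S \<noteq> {} \<and> S \<subseteq> colorings V E k \<and>
     (\<exists>L. \<forall>\<gamma>\<in>S. restrict \<gamma> T = L) \<and>
     induces_connected (recol_adj V) S"

text \<open>Label components: maximal such sets.  They are the nodes of the contracted
  solution graph C^c_k(G,T).\<close>
definition label_components ::
    "'v set \<Rightarrow> 'v set set \<Rightarrow> nat \<Rightarrow> 'v set \<Rightarrow> ('v \<Rightarrow> nat) set set" where
  "label_components V E k T =
     {S. label_connected_set V E k T S \<and>
         (\<forall>S'. label_connected_set V E k T S' \<and> S \<subseteq> S' \<longrightarrow> S' = S)}"

definition contracted_adj ::
    "'v set \<Rightarrow> 'v set set \<Rightarrow> nat \<Rightarrow> 'v set \<Rightarrow> ('v \<Rightarrow> nat) set \<Rightarrow> ('v \<Rightarrow> nat) set \<Rightarrow> bool" where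
  "contracted_adj V E k T x y \<longleftrightarrow>
     x \<in> label_components V E k T \<and> y \<in> label_components V E k T \<and> x \<noteq> y \<and>
     (\<exists>\<gamma>\<in>x. \<exists>\<gamma>'\<in>y. recol_adj V \<gamma> \<gamma>')"

definition contracted_label ::
    "'v set \<Rightarrow> ('v \<Rightarrow> nat) set \<Rightarrow> ('v \<Rightarrow> nat)" where
  "contracted_label T x = (THE L. \<forall>\<gamma>\<in>x. restrict \<gamma> T = L)"

definition node_of ::
    "'v set \<Rightarrow> 'v set set \<Rightarrow> nat \<Rightarrow> 'v set \<Rightarrow> ('v \<Rightarrow> nat) \<Rightarrow> ('v \<Rightarrow> nat) set" where
  "node_of V E k T \<gamma> = (THE x. x \<in> label_components V E k T \<and> \<gamma> \<in> x)"

definition same_component ::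
    "'v set \<Rightarrow> 'v set set \<Rightarrow> nat \<Rightarrow> 'v set \<Rightarrow> ('v \<Rightarrow> nat) set \<Rightarrow> ('v \<Rightarrow> nat) set \<Rightarrow> bool" where
  "same_component V E k T x y \<longleftrightarrow>
     (x, y) \<in> {(a, b). contracted_adj V E k T a b}\<^sup>*"

end

theory Submission
  imports Defs
begin

definition RL :: "'v set \<Rightarrow> 'v set set \<Rightarrow> nat \<Rightarrow> 'v set \<Rightarrow> (('v \<Rightarrow> nat) \<times> ('v \<Rightarrow> nat)) set" where
  "RL V E k T = {(a,b). a \<in> colorings V E k \<and> b \<in> colorings V E k \<and> restrict a T = restrict b T \<and> recol_adj V a b}"

definition comp :: "'v set \<Rightarrow> 'v set set \<Rightarrow> nat \<Rightarrow> 'v set \<Rightarrow> ('v \<Rightarrow> nat) \<Rightarrow> ('v \<Rightarrow> nat) set" where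
  "comp V E k T g = {d. (g,d) \<in> (RL V E k T)\<^sup>*}"

definition conn :: "'v set \<Rightarrow> 'v set set \<Rightarrow> nat \<Rightarrow> (('v \<Rightarrow> nat) \<times> ('v \<Rightarrow> nat)) set" where
  "conn V E k = {(a,b). a \<in> colorings V E k \<and> b \<in> colorings V E k \<and> recol_adj V a b}\<^sup>*"

lemma recol_sym: "recol_adj V a b \<Longrightarrow> recol_adj V b a"
proof -
  have "{v \<in> V. a v \<noteq> b v} = {v \<in> V. b v \<noteq> a v}" by auto
  then show "recol_adj V a b \<Longrightarrow> recol_adj V b a" unfolding recol_adj_def by simp
qed

lemma RL_sym: "sym (RL V E k T)"
proof (rule symI)
  fix a b assume "(a, b) \<in> RL V E k T"
  then show "(b, a) \<in> RL V E k T" unfolding RL_def using recol_sym[of V a b] by simp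
qed

lemma RL_star_sym: "(a,b) \<in> (RL V E k T)\<^sup>* \<Longrightarrow> (b,a) \<in> (RL V E k T)\<^sup>*"
  by (metis RL_sym rtrancl_converseI sym_conv_converse_eq)

lemma RL_star_props:
  assumes "(g,d) \<in> (RL V E k T)\<^sup>*" "g \<in> colorings V E k"
  shows "d \<in> colorings V E k \<and> restrict d T = restrict g T"
  using assms by (induction rule: rtrancl_induct) (auto simp: RL_def)

lemma comp_ind:
  assumes "(x,y) \<in> (RL V E k T)\<^sup>*" "x \<in> comp V E k T g"
  shows "(x,y) \<in> {(a, b). a \<in> comp V E k T g \<and> b \<in> comp V E k T g \<and> recol_adj V a b}\<^sup>*"
  using assms
proof (induction rule: rtrancl_induct)
  case base then show ?case by simp
next
  case (step y z)
  have "y \<in> comp V E k T g" using step unfolding comp_def by auto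
  moreover have "z \<in> comp V E k T g" using calculation step(2) unfolding comp_def by auto
  ultimately show ?case using step by (auto simp: RL_def intro: rtrancl_into_rtrancl)
qed

lemma comp_lcs:
  assumes "g \<in> colorings V E k"
  shows "label_connected_set V E k T (comp V E k T g)"
  unfolding label_connected_set_def
proof (intro conjI)
  show "comp V E k T g \<noteq> {}" by (auto simp: comp_def)
  show "comp V E k T g \<subseteq> colorings V E k" using RL_star_props[OF _ assms] unfolding comp_def by blast
  show "\<exists>L. \<forall>\<gamma>\<in>comp V E k T g. restrict \<gamma> T = L"
    using RL_star_props[OF _ assms] unfolding comp_def by blast
  show "induces_connected (recol_adj V) (comp V E k T g)"
    unfolding induces_connected_def
  proof (intro ballI)
    fix x y assume x: "x \<in> comp V E k T g" and y: "y \<in> comp V E k T g"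
    have "(x,y) \<in> (RL V E k T)\<^sup>*" using x y unfolding comp_def
      by (metis RL_star_sym mem_Collect_eq rtrancl_trans)
    then show "(x, y) \<in> {(a, b). a \<in> comp V E k T g \<and> b \<in> comp V E k T g \<and> recol_adj V a b}\<^sup>*"
      using comp_ind x by blast
  qed
qed

lemma lcs_sub_comp:
  assumes "label_connected_set V E k T S" "g \<in> S"
  shows "S \<subseteq> comp V E k T g"
proof
  fix d assume d: "d \<in> S"
  from assms obtain L where L: "\<forall>\<gamma>\<in>S. restrict \<gamma> T = L" and SC: "S \<subseteq> colorings V E k"
    and ic: "induces_connected (recol_adj V) S"
    unfolding label_connected_set_def by blast
  have "(g,d) \<in> {(a, b). a \<in> S \<and> b \<in> S \<and> recol_adj V a b}\<^sup>*"
    using ic assms(2) d unfolding induces_connected_def by blast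
  moreover have "{(a, b). a \<in> S \<and> b \<in> S \<and> recol_adj V a b} \<subseteq> RL V E k T"
    using L SC unfolding RL_def by auto
  ultimately show "d \<in> comp V E k T g" unfolding comp_def using rtrancl_mono by blast
qed

lemma comp_lc:
  assumes "g \<in> colorings V E k"
  shows "comp V E k T g \<in> label_components V E k T"
  unfolding label_components_def
proof (intro CollectI conjI allI impI)
  show "label_connected_set V E k T (comp V E k T g)" using comp_lcs assms .
  fix S' assume "label_connected_set V E k T S' \<and> comp V E k T g \<subseteq> S'"
  moreover have "g \<in> comp V E k T g" by (simp add: comp_def)
  ultimately show "S' = comp V E k T g" using lcs_sub_comp by blast
qed

lemma lc_eq_comp:
  assumes "x \<in> label_components V E k T" "g \<in> x"
  shows "x = comp V E k T g"
proof -
  have lx: "label_connected_set V E k T x" using assms unfolding label_components_def by blast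
  then have g: "g \<in> colorings V E k" using assms(2) unfolding label_connected_set_def by blast
  have "x \<subseteq> comp V E k T g" using lcs_sub_comp lx assms(2) .
  then show ?thesis using assms(1) comp_lcs[OF g] unfolding label_components_def by blast
qed

lemma node_of_eq:
  assumes "g \<in> colorings V E k"
  shows "node_of V E k T g = comp V E k T g"
  unfolding node_of_def
proof (rule the_equality)
  show "comp V E k T g \<in> label_components V E k T \<and> g \<in> comp V E k T g"
    using comp_lc assms by (auto simp: comp_def)
  show "\<And>x. x \<in> label_components V E k T \<and> g \<in> x \<Longrightarrow> x = comp V E k T g"
    using lc_eq_comp by blast
qed

lemma lc_conn:
  assumes "x \<in> label_components V E k T" "a \<in> x" "b \<in> x"
  shows "(a,b) \<in> conn V E k"
proof -
  have lx: "label_connected_set V E k T x" using assms unfolding label_components_def by blast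
  then have "(a,b) \<in> {(c, d). c \<in> x \<and> d \<in> x \<and> recol_adj V c d}\<^sup>*"
    using assms unfolding label_connected_set_def induces_connected_def by blast
  moreover have "{(c, d). c \<in> x \<and> d \<in> x \<and> recol_adj V c d} \<subseteq>
     {(a,b). a \<in> colorings V E k \<and> b \<in> colorings V E k \<and> recol_adj V a b}"
    using lx unfolding label_connected_set_def by auto
  ultimately show ?thesis unfolding conn_def using rtrancl_mono by blast
qed

lemma same_conn:
  assumes "(x,y) \<in> {(a, b). contracted_adj V E k T a b}\<^sup>*" "x \<in> label_components V E k T"
  shows "\<And>g d. g \<in> x \<Longrightarrow> d \<in> y \<Longrightarrow> (g,d) \<in> conn V E k"
  using assms(1)
proof (induction rule: rtrancl_induct)
  case base then show ?case using lc_conn assms(2) by blast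
next
  case (step y z g d)
  then obtain g1 g2 where g1: "g1 \<in> y" and g2: "g2 \<in> z" and adj: "recol_adj V g1 g2"
    and yl: "y \<in> label_components V E k T" and zl: "z \<in> label_components V E k T"
    unfolding contracted_adj_def by auto
  have c1: "(g,g1) \<in> conn V E k" using step g1 by blast
  have col: "g1 \<in> colorings V E k" "g2 \<in> colorings V E k"
    using yl zl g1 g2 unfolding label_components_def label_connected_set_def by auto
  have c2: "(g1,g2) \<in> conn V E k" using adj col unfolding conn_def by auto
  have c3: "(g2,d) \<in> conn V E k" using lc_conn zl g2 step by blast
  show ?case using c1 c2 c3 unfolding conn_def by (meson rtrancl_trans)
qed

lemma conn_same:
  assumes "(g,d) \<in> conn V E k" "g \<in> colorings V E k"
  shows "same_component V E k T (comp V E k T g) (comp V E k T d)"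
  using assms(1) unfolding conn_def
proof (induction rule: rtrancl_induct)
  case base then show ?case by (simp add: same_component_def)
next
  case (step y z)
  then have y: "y \<in> colorings V E k" and z: "z \<in> colorings V E k" and adj: "recol_adj V y z" by auto
  have "comp V E k T y = comp V E k T z \<or> contracted_adj V E k T (comp V E k T y) (comp V E k T z)"
    unfolding contracted_adj_def using comp_lc[OF y] comp_lc[OF z] adj
    by (auto simp: comp_def)
  then show ?case using step(3) unfolding same_component_def
    by (auto intro: rtrancl_into_rtrancl)
qed

lemma restr_col:
  assumes "subgraph V' E' V E" "d \<in> colorings V E k"
  shows "restrict d V' \<in> colorings V' E' k"
proof -
  have "V' \<subseteq> V" "E' \<subseteq> E" "\<forall>e\<in>E'. e \<subseteq> V'"
    using assms(1) unfolding subgraph_def graph_def by auto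
  then show ?thesis using assms(2) unfolding colorings_def by (auto simp: PiE_def Pi_def)
qed

lemma restr_conn:
  assumes "subgraph V' E' V E" "(a,b) \<in> conn V E k"
  shows "(restrict a V', restrict b V') \<in> conn V' E' k"
  using assms(2) unfolding conn_def
proof (induction rule: rtrancl_induct)
  case base then show ?case by simp
next
  case (step y z)
  then have y: "y \<in> colorings V E k" and z: "z \<in> colorings V E k" and adj: "recol_adj V y z" by auto
  have fin: "finite V" and sub: "V' \<subseteq> V" using assms(1) unfolding subgraph_def graph_def by auto
  have eq: "{v \<in> V'. restrict y V' v \<noteq> restrict z V' v} = {v \<in> V'. y v \<noteq> z v}" by auto
  have "card {v \<in> V'. y v \<noteq> z v} \<le> card {v \<in> V. y v \<noteq> z v}"
    using fin sub by (intro card_mono) auto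
  then have "card {v \<in> V'. y v \<noteq> z v} = 0 \<or> card {v \<in> V'. y v \<noteq> z v} = 1"
    using adj unfolding recol_adj_def by linarith
  moreover have "finite {v \<in> V'. y v \<noteq> z v}" using fin sub by (auto intro: finite_subset)
  ultimately have "restrict y V' = restrict z V' \<or> recol_adj V' (restrict y V') (restrict z V')"
    unfolding recol_adj_def eq by (auto simp: restrict_def fun_eq_iff)
  then show ?case
  proof
    assume "restrict y V' = restrict z V'"
    then show ?thesis using step(3) by simp
  next
    assume "recol_adj V' (restrict y V') (restrict z V')"
    then have "(restrict y V', restrict z V') \<in> {(a,b). a \<in> colorings V' E' k \<and> b \<in> colorings V' E' k \<and> recol_adj V' a b}"
      using restr_col[OF assms(1) y] restr_col[OF assms(1) z] by blast
    with step(3) show ?thesis by (rule rtrancl.rtrancl_into_rtrancl)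
  qed
qed

theorem proposition9:
  fixes V V' :: "'v set" and E E' :: "'v set set" and k :: nat
    and T T' :: "'v set" and \<alpha> \<beta> :: "'v \<Rightarrow> nat"
  assumes "subgraph V' E' V E"
    and "\<alpha> \<in> colorings V E k" and "\<beta> \<in> colorings V E k"
    and "T' \<subseteq> V'" and "T \<subseteq> V"
    and "\<not> same_component V' E' k T'
            (node_of V' E' k T' (restrict \<alpha> V')) (node_of V' E' k T' (restrict \<beta> V'))"
  shows "\<not> same_component V E k T (node_of V E k T \<alpha>) (node_of V E k T \<beta>)"
proof
  assume "same_component V E k T (node_of V E k T \<alpha>) (node_of V E k T \<beta>)"
  then have "(comp V E k T \<alpha>, comp V E k T \<beta>) \<in> {(a, b). contracted_adj V E k T a b}\<^sup>*"
    using node_of_eq assms(2,3) unfolding same_component_def by metis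
  then have "(\<alpha>,\<beta>) \<in> conn V E k"
    using same_conn comp_lc[OF assms(2)] by (fastforce simp: comp_def)
  then have "(restrict \<alpha> V', restrict \<beta> V') \<in> conn V' E' k" using restr_conn assms(1) by blast
  then have "same_component V' E' k T' (comp V' E' k T' (restrict \<alpha> V')) (comp V' E' k T' (restrict \<beta> V'))"
    using conn_same restr_col[OF assms(1,2)] by blast
  then show False using assms(6) node_of_eq restr_col[OF assms(1)] assms(2,3) by metis
qed

end
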